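(* Let $m\ge 2$ and let $K\neq\Delta_{[m]}$ be a simplicial complex on $[m]$. Then $$\max\bigl(m-1,\ \chi(K),\ \chi(K^\vee)\bigr)\le \chi(\mathrm{Bier}(K))\le m.$$
   Context: A simplicial complex $K$ on $[m]=\{1,\dots,m\}$ is a nonempty family of subsets of $[m]$ closed under taking subsets. $V(K)=\{i:\{i\}\in K\}$ is its set of (geometric) vertices; elements $i\in[m]$ with $\{i\}\notin K$ are ghost vertices. $\Delta_{[m]}=2^{[m]}$. Let $[m']=\{1',\dots,m'\}$ be a disjoint copy of $[m]$ and for $I\subseteq[m]$ let $I'=\{i':i\in I\}$. For $K\ne\Delta_{[m]}$ the Alexander dual $K^\vee$ is the simplicial complex on $[m']$ with $J'\in K^\vee$ iff $[m]\setminus J\notin K$. The Bier sphere $\mathrm{Bier}(K)$ is the simplicial complex on $[m]\sqcup[m']$ whose faces are $I\sqcup J'$ with $I\in K$, $J'\in K^\vee$, $I\cap J=\varnothing$; it is a PL sphere of dimension $m-2$. The chromatic number $\chi(L)$ of a simplicial complex $L$ is the least number of colors in a map $c\colon V(L)\to C$ with $c(u)\ne c(v)$ whenever $\{u,v\}\in L$ (i.e. the chromatic number of the 1-skeleton). *)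

theory Defs
  imports Main
begin

definition simplicial_complex_on :: "nat \<Rightarrow> nat set set \<Rightarrow> bool" where
  "simplicial_complex_on m K \<longleftrightarrow>
     K \<noteq> {} \<and> (\<forall>F\<in>K. F \<subseteq> {1..m}) \<and> (\<forall>F\<in>K. \<forall>G. G \<subseteq> F \<longrightarrow> G \<in> K)"

definition full_simplex :: "nat \<Rightarrow> nat set set" where
  "full_simplex m = Pow {1..m}"

text \<open>Alexander dual, on the disjoint copy [m'] (encoded as Inr i for i').\<close>
definition alexander_dual :: "nat \<Rightarrow> nat set set \<Rightarrow> (nat + nat) set set" where
  "alexander_dual m K = {Inr ` J | J. J \<subseteq> {1..m} \<and> {1..m} - J \<notin> K}"

text \<open>Bier sphere on [m] \<squnion> [m'] (Inl i for i, Inr i for i').\<close>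
definition bier :: "nat \<Rightarrow> nat set set \<Rightarrow> (nat + nat) set set" where
  "bier m K = {Inl ` I \<union> Inr ` J | I J. I \<in> K \<and> Inr ` J \<in> alexander_dual m K \<and> I \<inter> J = {}}"

definition vertices :: "'a set set \<Rightarrow> 'a set" where
  "vertices L = {v. {v} \<in> L}"

definition proper_colouring :: "'a set set \<Rightarrow> nat \<Rightarrow> ('a \<Rightarrow> nat) \<Rightarrow> bool" where
  "proper_colouring L k c \<longleftrightarrow>
     (\<forall>v\<in>vertices L. c v < k) \<and> (\<forall>u v. u \<noteq> v \<and> {u, v} \<in> L \<longrightarrow> c u \<noteq> c v)"

definition chromatic_number :: "'a set set \<Rightarrow> nat" where
  "chromatic_number L = (LEAST k. \<exists>c. proper_colouring L k c)"

end

theory Submission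
  imports Defs
begin

lemma col_le: "proper_colouring L k c \<Longrightarrow> chromatic_number L \<le> k"
  unfolding chromatic_number_def by (rule Least_le) blast

lemma col_map:
  assumes "proper_colouring L k c" "\<forall>F\<in>L'. f ` F \<in> L" "inj f"
  shows "proper_colouring L' k (c \<circ> f)"
proof -
  have v: "\<forall>v\<in>vertices L'. c (f v) < k"
  proof
    fix v assume "v \<in> vertices L'"
    then have "{v} \<in> L'" by (simp add: vertices_def)
    then have "{f v} \<in> L" using assms(2) by force
    then show "c (f v) < k" using assms(1) by (simp add: proper_colouring_def vertices_def)
  qed
  have e: "\<forall>u v. u \<noteq> v \<and> {u, v} \<in> L' \<longrightarrow> c (f u) \<noteq> c (f v)"
  proof (intro allI impI)
    fix u v assume h: "u \<noteq> v \<and> {u, v} \<in> L'"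
    then have "{f u, f v} \<in> L" using assms(2) by force
    moreover have "f u \<noteq> f v" using h assms(3) by (meson injD)
    ultimately show "c (f u) \<noteq> c (f v)" using assms(1) by (simp add: proper_colouring_def)
  qed
  show ?thesis using v e by (simp add: proper_colouring_def)
qed

lemma clique_le:
  assumes "proper_colouring L k c" "finite F" "\<forall>u\<in>F. {u} \<in> L"
    "\<forall>u\<in>F. \<forall>v\<in>F. u \<noteq> v \<longrightarrow> {u, v} \<in> L"
  shows "card F \<le> k"
proof -
  have "inj_on c F" using assms(1,4) unfolding proper_colouring_def inj_on_def by blast
  moreover have "c ` F \<subseteq> {..<k}" using assms(1,3) by (auto simp: proper_colouring_def vertices_def)
  ultimately show ?thesis by (metis card_inj_on_le card_lessThan finite_lessThan)
qed

lemma dual_mem: "Inr ` J \<in> alexander_dual m K \<longleftrightarrow> J \<subseteq> {1..m} \<and> {1..m} - J \<notin> K"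
  unfolding alexander_dual_def by (simp add: inj_image_eq_iff)

lemma bier_down:
  assumes sc: "simplicial_complex_on m K" and I: "I \<in> K" and J: "J \<subseteq> {1..m}" "{1..m} - J \<notin> K"
    and d: "I \<inter> J = {}" and G: "G \<subseteq> Inl ` I \<union> Inr ` J"
  shows "G \<in> bier m K"
proof -
  define I' where "I' = {i. Inl i \<in> G}"
  define J' where "J' = {j. Inr j \<in> G}"
  have GG: "G = Inl ` I' \<union> Inr ` J'"
  proof (rule set_eqI)
    fix x show "x \<in> G \<longleftrightarrow> x \<in> Inl ` I' \<union> Inr ` J'"
      unfolding I'_def J'_def by (cases x) auto
  qed
  have "I' \<subseteq> I" "J' \<subseteq> J" using G unfolding I'_def J'_def by auto
  then have "I' \<in> K" using sc I by (simp add: simplicial_complex_on_def)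
  moreover have "Inr ` J' \<in> alexander_dual m K"
  proof -
    have "{1..m} - J \<subseteq> {1..m} - J'" using \<open>J' \<subseteq> J\<close> by auto
    then have "{1..m} - J' \<notin> K" using J(2) sc by (auto simp: simplicial_complex_on_def)
    then show ?thesis using \<open>J' \<subseteq> J\<close> J(1) by (simp add: dual_mem)
  qed
  moreover have "I' \<inter> J' = {}" using d \<open>I' \<subseteq> I\<close> \<open>J' \<subseteq> J\<close> by auto
  ultimately show ?thesis unfolding bier_def GG by blast
qed

theorem mainTheorem1:
  fixes m :: nat and K :: "nat set set"
  assumes "m \<ge> 2"
    and "simplicial_complex_on m K"
    and "K \<noteq> full_simplex m"
  shows "max (m - 1) (max (chromatic_number K) (chromatic_number (alexander_dual m K)))
           \<le> chromatic_number (bier m K)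
         \<and> chromatic_number (bier m K) \<le> m"
proof -
  note sc = assms(2)
  have Ksub: "K \<subseteq> Pow {1..m}" using sc by (auto simp: simplicial_complex_on_def)
  have notfull: "{1..m} \<notin> K"
  proof
    assume "{1..m} \<in> K"
    then have "Pow {1..m} \<subseteq> K" using sc by (auto simp: simplicial_complex_on_def)
    then show False using Ksub assms(3) by (simp add: full_simplex_def)
  qed
  have empty: "{} \<in> K" using sc by (auto simp: simplicial_complex_on_def)
  define c0 where "c0 = (\<lambda>x::nat+nat. case x of Inl i \<Rightarrow> i - 1 | Inr i \<Rightarrow> i - 1)"
  have pc0: "proper_colouring (bier m K) m c0"
    unfolding proper_colouring_def
  proof (intro conjI ballI allI impI)
    fix v assume "v \<in> vertices (bier m K)"
    then obtain I J where h: "{v} = Inl ` I \<union> Inr ` J" "I \<in> K" "Inr ` J \<in> alexander_dual m K"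
      by (auto simp: vertices_def bier_def)
    have "J \<subseteq> {1..m}" using h(3) by (simp add: dual_mem)
    moreover have "I \<subseteq> {1..m}" using h(2) Ksub by auto
    moreover have "v \<in> Inl ` I \<union> Inr ` J" using h(1) by auto
    ultimately show "c0 v < m" unfolding c0_def by (auto simp: subset_iff)
  next
    fix u v assume h: "u \<noteq> v \<and> {u, v} \<in> bier m K"
    then obtain I J where h2: "{u, v} = Inl ` I \<union> Inr ` J" "I \<inter> J = {}" "I \<in> K"
       "Inr ` J \<in> alexander_dual m K"
      unfolding bier_def by blast
    have IJ: "I \<subseteq> {1..m}" "J \<subseteq> {1..m}" using h2(3,4) Ksub by (auto simp: dual_mem)
    have uu: "u \<in> Inl ` I \<union> Inr ` J" "v \<in> Inl ` I \<union> Inr ` J" using h2(1) by auto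
    show "c0 u \<noteq> c0 v"
    proof
      assume eq: "c0 u = c0 v"
      have pos: "\<And>y. y \<in> Inl ` I \<union> Inr ` J \<Longrightarrow> c0 y + 1 = (case y of Inl i \<Rightarrow> i | Inr i \<Rightarrow> i)"
      proof -
        fix y assume y: "y \<in> Inl ` I \<union> Inr ` J"
        show "c0 y + 1 = (case y of Inl i \<Rightarrow> i | Inr i \<Rightarrow> i)"
        proof (cases y)
          case (Inl i)
          then have "i \<in> I" using y by auto
          then have "i \<ge> 1" using IJ(1) by auto
          then show ?thesis using Inl unfolding c0_def by simp
        next
          case (Inr i)
          then have "i \<in> J" using y by auto
          then have "i \<ge> 1" using IJ(2) by auto
          then show ?thesis using Inr unfolding c0_def by simp
        qed
      qed
      have "u = v"
      proof (cases u; cases v)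
        fix a b assume ab: "u = Inl a" "v = Inl b"
        have "c0 u + 1 = a" using pos[OF uu(1)] ab(1) by simp
        moreover have "c0 v + 1 = b" using pos[OF uu(2)] ab(2) by simp
        ultimately have "a = b" using eq by linarith
        then show "u = v" using ab by simp
      next
        fix a b assume ab: "u = Inl a" "v = Inr b"
        have "c0 u + 1 = a" using pos[OF uu(1)] ab(1) by simp
        moreover have "c0 v + 1 = b" using pos[OF uu(2)] ab(2) by simp
        ultimately have "a = b" using eq by linarith
        moreover have "a \<in> I" using ab(1) uu(1) by auto
        moreover have "b \<in> J" using ab(2) uu(2) by auto
        ultimately show "u = v" using h2(2) by (simp add: disjoint_iff)
      next
        fix a b assume ab: "u = Inr a" "v = Inl b"
        have "c0 u + 1 = a" using pos[OF uu(1)] ab(1) by simp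
        moreover have "c0 v + 1 = b" using pos[OF uu(2)] ab(2) by simp
        ultimately have "a = b" using eq by linarith
        moreover have "a \<in> J" using ab(1) uu(1) by auto
        moreover have "b \<in> I" using ab(2) uu(2) by auto
        ultimately show "u = v" using h2(2) by (simp add: disjoint_iff)
      next
        fix a b assume ab: "u = Inr a" "v = Inr b"
        have "c0 u + 1 = a" using pos[OF uu(1)] ab(1) by simp
        moreover have "c0 v + 1 = b" using pos[OF uu(2)] ab(2) by simp
        ultimately have "a = b" using eq by linarith
        then show "u = v" using ab by simp
      qed
      then show False using h by simp
    qed
  qed
  have cb: "chromatic_number (bier m K) \<le> m" using pc0 col_le by blast
  define k where "k = chromatic_number (bier m K)"
  obtain c where pc: "proper_colouring (bier m K) k c"
  proof -
    have "\<exists>c. proper_colouring (bier m K) k c"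
      unfolding k_def chromatic_number_def by (rule LeastI_ex) (use pc0 in blast)
    then show ?thesis using that by blast
  qed
  have "proper_colouring K k (c \<circ> Inl)"
  proof (rule col_map[OF pc _ inj_Inl], rule ballI)
    fix F assume "F \<in> K"
    then show "Inl ` F \<in> bier m K"
      using bier_down[OF sc, of F "{}" "Inl ` F"] notfull by auto
  qed
  then have c1: "chromatic_number K \<le> k" by (rule col_le)
  have "proper_colouring (alexander_dual m K) k (c \<circ> id)"
  proof (rule col_map[OF pc _ inj_on_id], rule ballI)
    fix F assume "F \<in> alexander_dual m K"
    then obtain J where "F = Inr ` J" "J \<subseteq> {1..m}" "{1..m} - J \<notin> K"
      unfolding alexander_dual_def by blast
    then show "id ` F \<in> bier m K"
      using bier_down[OF sc empty, of J F] by auto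
  qed
  then have c2: "chromatic_number (alexander_dual m K) \<le> k" by (rule col_le)
  have finK: "finite K" using Ksub by (meson finite_Pow_iff finite_atLeastAtMost finite_subset)
  obtain I where I: "I \<in> K" "\<forall>I'\<in>K. card I' \<le> card I"
  proof -
    have ne: "card ` K \<noteq> {}" using empty by blast
    have "Max (card ` K) \<in> card ` K" using Max_in[OF _ ne] finK by simp
    then obtain I where "I \<in> K" "card I = Max (card ` K)" by force
    moreover have "\<forall>I'\<in>K. card I' \<le> Max (card ` K)" using finK by simp
    ultimately show ?thesis using that by metis
  qed
  have Im: "I \<subseteq> {1..m}" using I Ksub by auto
  have "I \<noteq> {1..m}" using notfull I(1) by auto
  then have "\<exists>x. x \<in> {1..m} \<and> x \<notin> I" using Im by blast
  then obtain x where x: "x \<in> {1..m}" "x \<notin> I" by blast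
  have Ix: "I \<union> {x} \<notin> K"
  proof
    assume "I \<union> {x} \<in> K"
    then have "card (I \<union> {x}) \<le> card I" using I by blast
    moreover have "finite I" using Im finite_subset by blast
    ultimately show False using x(2) by simp
  qed
  define J where "J = {1..m} - I - {x}"
  have J: "J \<subseteq> {1..m}" "{1..m} - J \<notin> K" "I \<inter> J = {}"
  proof -
    have "{1..m} - J = I \<union> {x}" using Im x unfolding J_def by auto
    then show "{1..m} - J \<notin> K" using Ix by simp
  qed (auto simp: J_def)
  define F where "F = Inl ` I \<union> Inr ` J"
  have finI: "finite I" using Im finite_subset by blast
  have finJ: "finite J" unfolding J_def by simp
  have "card F = card (Inl ` I :: (nat+nat) set) + card (Inr ` J :: (nat+nat) set)"
  proof -
    have "(Inl ` I :: (nat+nat) set) \<inter> Inr ` J = {}" by auto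
    then show ?thesis using card_Un_disjoint[of "Inl ` I :: (nat+nat) set" "Inr ` J"] finI finJ by (simp add: F_def)
  qed
  also have "card (Inl ` I :: (nat+nat) set) = card I" by (rule card_image) simp
  also have "card (Inr ` J :: (nat+nat) set) = card J" by (rule card_image) simp
  finally have "card F = card I + card J" .
  moreover have "card J = m - card I - 1"
  proof -
    have "x \<in> {1..m} - I" using x by simp
    then have "card J = card ({1..m} - I) - 1" unfolding J_def by (rule card_Diff_singleton)
    also have "\<dots> = m - card I - 1" using Im by (simp add: card_Diff_subset finI)
    finally show ?thesis .
  qed
  moreover have "card I < m"
  proof -
    have "I \<subset> {1..m}" using Im x by blast
    then have "card I < card {1..m}" by (rule psubset_card_mono[rotated]) simp
    then show ?thesis by simp
  qed
  ultimately have cF: "card F = m - 1" by simp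
  have "card F \<le> k"
  proof (rule clique_le[OF pc])
    show "finite F" unfolding F_def J_def using finI by simp
    show "\<forall>u\<in>F. {u} \<in> bier m K"
    proof
      fix u assume "u \<in> F"
      then have "{u} \<subseteq> Inl ` I \<union> Inr ` J" unfolding F_def by simp
      then show "{u} \<in> bier m K" by (rule bier_down[OF sc I(1) J(1,2,3)])
    qed
    show "\<forall>u\<in>F. \<forall>v\<in>F. u \<noteq> v \<longrightarrow> {u, v} \<in> bier m K"
    proof (intro ballI impI)
      fix u v assume "u \<in> F" "v \<in> F"
      then have "{u, v} \<subseteq> Inl ` I \<union> Inr ` J" unfolding F_def by simp
      then show "{u, v} \<in> bier m K" by (rule bier_down[OF sc I(1) J(1,2,3)])
    qed
  qed
  then have "m - 1 \<le> k" using cF by simp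
  then show ?thesis using c1 c2 cb unfolding k_def[symmetric] by simp
qed

end
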